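(* Let $\bar{\mathcal{X}}=(\mathcal{X}_0,\mathcal{X}_1)$ be a pair of ri spaces over $(\Omega,\mu)$ with fundamental functions $\phi_0,\phi_1$, and let $\bar\phi\in\mathscr{P}$. Then the fundamental function of the abstract Marcinkiewicz space $M_{\bar\phi}(\bar{\mathcal{X}})$ satisfies $\phi_{M_{\bar\phi}(\bar{\mathcal{X}})}(t)=\bar\phi(\phi_0(t),\phi_1(t))$ for all $t>0$.
   Context: $(\Omega,\mu)$ has $\mu(\Omega)=1$ and is purely non-atomic or completely atomic with atoms of equal measure. An ri space is a Banach function space over $(\Omega,\mu)$ whose norm is rearrangement invariant; its fundamental function is $\phi_{\mathcal{X}}(t)=\|\chi_{E_t}\|_{\mathcal{X}}$ with $\mu(E_t)=t$. $\mathscr{P}$ is the set of functions $\mathbb{R}_{\ge0}\times\mathbb{R}_{\ge0}\to\mathbb{R}_{\ge0}$ that are positively homogeneous, non-zero except at $(0,0)$, and nondecreasing in both arguments. For $\bar\phi\in\mathscr{P}$, its dual is $\bar\phi^*(\alpha,\beta)=1/\bar\phi(1/\alpha,1/\beta)$. The $K$-functional is $K(s_0,s_1,X,\bar{\mathcal{X}})=\inf\{s_0\|X_0\|_{\mathcal{X}_0}+s_1\|X_1\|_{\mathcal{X}_1}:X=X_0+X_1,\ X_i\in\mathcal{X}_i\}$, and $M_{\bar\phi}(\bar{\mathcal{X}})$ is the space of $X\in\mathcal{X}_0+\mathcal{X}_1$ with finite norm $\|X\|_{M_{\bar\phi}(\bar{\mathcal{X}})}=\sup_{s_0,s_1}K(s_0,s_1,X,\bar{\mathcal{X}})/\bar\phi^*(s_0,s_1)$.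 *)

theory Defs
  imports "HOL-Probability.Probability"
begin

definition is_atom :: "'a measure \<Rightarrow> 'a set \<Rightarrow> bool" where
  "is_atom M A \<longleftrightarrow> A \<in> sets M \<and> measure M A > 0 \<and>
     (\<forall>B\<in>sets M. B \<subseteq> A \<longrightarrow> measure M B = 0 \<or> measure M B = measure M A)"

definition nonatomic :: "'a measure \<Rightarrow> bool" where
  "nonatomic M \<longleftrightarrow> (\<forall>A\<in>sets M. measure M A > 0 \<longrightarrow>
     (\<exists>B\<in>sets M. B \<subseteq> A \<and> 0 < measure M B \<and> measure M B < measure M A))"

text \<open>Completely atomic with (finitely many, since the total mass is 1) atoms of equal measure.\<close>
definition equal_atomic :: "'a measure \<Rightarrow> bool" where
  "equal_atomic M \<longleftrightarrow> (\<exists>(n::nat) A. n > 0 \<and> (\<forall>i<n. is_atom M (A i) \<and> measure M (A i) = 1 / real n)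
      \<and> disjoint_family_on A {..<n} \<and> (\<Union>i<n. A i) = space M)"

definition admissible_space :: "'a measure \<Rightarrow> bool" where
  "admissible_space M \<longleftrightarrow> prob_space M \<and> (nonatomic M \<or> equal_atomic M)"

text \<open>A Banach function norm (Luxemburg axioms) on real-valued measurable functions,
  with value \<open>\<infinity>\<close> outside the space. The space is \<open>{f. N f < \<infinity>}\<close>.\<close>
definition banach_function_norm :: "'a measure \<Rightarrow> (('a \<Rightarrow> real) \<Rightarrow> ennreal) \<Rightarrow> bool" where
  "banach_function_norm M N \<longleftrightarrow>
    (\<forall>f\<in>borel_measurable M. N f = 0 \<longleftrightarrow> (AE x in M. f x = 0)) \<and>
    (\<forall>f\<in>borel_measurable M. \<forall>c::real. N (\<lambda>x. c * f x) = ennreal \<bar>c\<bar> * N f) \<and>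
    (\<forall>f\<in>borel_measurable M. \<forall>g\<in>borel_measurable M. N (\<lambda>x. f x + g x) \<le> N f + N g) \<and>
    (\<forall>f\<in>borel_measurable M. \<forall>g\<in>borel_measurable M.
        (AE x in M. \<bar>g x\<bar> \<le> \<bar>f x\<bar>) \<longrightarrow> N g \<le> N f) \<and>
    (\<forall>(fs::nat \<Rightarrow> 'a \<Rightarrow> real) g. (\<forall>n. fs n \<in> borel_measurable M) \<longrightarrow> g \<in> borel_measurable M \<longrightarrow>
        (\<forall>n. AE x in M. 0 \<le> fs n x \<and> fs n x \<le> fs (Suc n) x) \<longrightarrow>
        (AE x in M. (\<lambda>n. fs n x) \<longlonglongrightarrow> g x) \<longrightarrow> (SUP n. N (fs n)) = N g) \<and>
    (\<forall>E\<in>sets M. emeasure M E < \<infinity> \<longrightarrow> N (indicator E) < \<infinity>) \<and>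
    (\<forall>E\<in>sets M. emeasure M E < \<infinity> \<longrightarrow> (\<exists>C::real. \<forall>f\<in>borel_measurable M.
        (\<integral>\<^sup>+x\<in>E. ennreal \<bar>f x\<bar> \<partial>M) \<le> ennreal C * N f))"

definition equimeasurable :: "'a measure \<Rightarrow> ('a \<Rightarrow> real) \<Rightarrow> ('a \<Rightarrow> real) \<Rightarrow> bool" where
  "equimeasurable M f g \<longleftrightarrow> (\<forall>s::real.
     emeasure M {x\<in>space M. \<bar>f x\<bar> > s} = emeasure M {x\<in>space M. \<bar>g x\<bar> > s})"

definition ri_space :: "'a measure \<Rightarrow> (('a \<Rightarrow> real) \<Rightarrow> ennreal) \<Rightarrow> bool" where
  "ri_space M N \<longleftrightarrow> banach_function_norm M N \<and>
     (\<forall>f\<in>borel_measurable M. \<forall>g\<in>borel_measurable M. equimeasurable M f g \<longrightarrow> N f = N g)"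

definition fundamental_function :: "'a measure \<Rightarrow> (('a \<Rightarrow> real) \<Rightarrow> ennreal) \<Rightarrow> real \<Rightarrow> ennreal" where
  "fundamental_function M N t = N (indicator (SOME E. E \<in> sets M \<and> measure M E = t))"

definition class_P :: "(real \<Rightarrow> real \<Rightarrow> real) \<Rightarrow> bool" where
  "class_P \<phi> \<longleftrightarrow>
    (\<forall>a\<ge>0. \<forall>b\<ge>0. \<phi> a b \<ge> 0) \<and>
    (\<forall>l>0. \<forall>a\<ge>0. \<forall>b\<ge>0. \<phi> (l * a) (l * b) = l * \<phi> a b) \<and>
    (\<forall>a\<ge>0. \<forall>b\<ge>0. (a, b) \<noteq> (0, 0) \<longrightarrow> \<phi> a b \<noteq> 0) \<and>
    (\<forall>a\<ge>0. \<forall>a'\<ge>a. \<forall>b\<ge>0. \<forall>b'\<ge>b. \<phi> a b \<le> \<phi> a' b')"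

definition dual_P :: "(real \<Rightarrow> real \<Rightarrow> real) \<Rightarrow> real \<Rightarrow> real \<Rightarrow> real" where
  "dual_P \<phi> a b = 1 / \<phi> (1 / a) (1 / b)"

definition K_functional :: "'a measure \<Rightarrow> (('a \<Rightarrow> real) \<Rightarrow> ennreal) \<Rightarrow> (('a \<Rightarrow> real) \<Rightarrow> ennreal)
    \<Rightarrow> real \<Rightarrow> real \<Rightarrow> ('a \<Rightarrow> real) \<Rightarrow> ennreal" where
  "K_functional M N0 N1 s0 s1 f =
     (INF p \<in> {(f0, f1). f0 \<in> borel_measurable M \<and> f1 \<in> borel_measurable M \<and>
                  N0 f0 < \<infinity> \<and> N1 f1 < \<infinity> \<and> (\<forall>x\<in>space M. f x = f0 x + f1 x)}.
        ennreal s0 * N0 (fst p) + ennreal s1 * N1 (snd p))"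

text \<open>Norm of \<open>M\<^sub>\<phi>(X0,X1)\<close> (value \<open>\<infinity>\<close> for functions not in the space).\<close>
definition marcinkiewicz_norm :: "'a measure \<Rightarrow> (real \<Rightarrow> real \<Rightarrow> real) \<Rightarrow> (('a \<Rightarrow> real) \<Rightarrow> ennreal)
    \<Rightarrow> (('a \<Rightarrow> real) \<Rightarrow> ennreal) \<Rightarrow> ('a \<Rightarrow> real) \<Rightarrow> ennreal" where
  "marcinkiewicz_norm M \<phi> N0 N1 f =
     (SUP p \<in> {0<..} \<times> {0<..}. K_functional M N0 N1 (fst p) (snd p) f / ennreal (dual_P \<phi> (fst p) (snd p)))"

end

theory Submission
  imports Defs
begin

lemma bfn_zero_iff:
  assumes "banach_function_norm M N" "f \<in> borel_measurable M"
  shows "N f = 0 \<longleftrightarrow> (AE x in M. f x = 0)"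
  using assms unfolding banach_function_norm_def by blast

lemma bfn_cmult:
  assumes "banach_function_norm M N" "f \<in> borel_measurable M"
  shows "N (\<lambda>x. c * f x) = ennreal \<bar>c\<bar> * N f"
  using assms unfolding banach_function_norm_def by blast

lemma bfn_triangle:
  assumes "banach_function_norm M N" "f \<in> borel_measurable M" "g \<in> borel_measurable M"
  shows "N (\<lambda>x. f x + g x) \<le> N f + N g"
  using assms unfolding banach_function_norm_def by blast

lemma bfn_mono:
  assumes "banach_function_norm M N" "f \<in> borel_measurable M" "g \<in> borel_measurable M"
    "AE x in M. \<bar>g x\<bar> \<le> \<bar>f x\<bar>"
  shows "N g \<le> N f"
  using assms unfolding banach_function_norm_def by blast

lemma bfn_ind_fin:
  assumes "banach_function_norm M N" "E \<in> sets M" "emeasure M E < \<infinity>"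
  shows "N (indicator E) < \<infinity>"
  using assms unfolding banach_function_norm_def by blast

lemma bfn_zero:
  assumes "banach_function_norm M N"
  shows "N (\<lambda>x. 0) = 0"
  using bfn_zero_iff[OF assms, of "\<lambda>x. 0"] by simp

lemma bfn_AE_eq:
  assumes "banach_function_norm M N" "f \<in> borel_measurable M" "g \<in> borel_measurable M"
    "AE x in M. f x = g x"
  shows "N f = N g"
proof (rule antisym)
  show "N f \<le> N g" by (rule bfn_mono[OF assms(1,3,2)]) (use assms(4) in auto)
  show "N g \<le> N f" by (rule bfn_mono[OF assms(1,2,3)]) (use assms(4) in auto)
qed

lemma bfn_sum:
  assumes "banach_function_norm M N" "finite K" "\<And>k. k \<in> K \<Longrightarrow> f k \<in> borel_measurable M"
  shows "N (\<lambda>x. \<Sum>k\<in>K. f k x) \<le> (\<Sum>k\<in>K. N (f k))"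
  using assms(2,3)
proof (induction K rule: finite_induct)
  case empty
  then show ?case using bfn_zero[OF assms(1)] by simp
next
  case (insert k K)
  have "N (\<lambda>x. \<Sum>k\<in>insert k K. f k x) = N (\<lambda>x. f k x + (\<Sum>k\<in>K. f k x))"
    using insert by simp
  also have "\<dots> \<le> N (f k) + N (\<lambda>x. \<Sum>k\<in>K. f k x)"
    using bfn_triangle[OF assms(1), of "f k" "\<lambda>x. \<Sum>k\<in>K. f k x"] insert by auto
  also have "\<dots> \<le> N (f k) + (\<Sum>k\<in>K. N (f k))"
    using insert by (intro add_left_mono) auto
  finally show ?case using insert by simp
qed

lemma ind_pos_norm:
  assumes "banach_function_norm M N" "E \<in> sets M" "emeasure M E > 0"
  shows "N (indicator E :: 'a \<Rightarrow> real) > 0"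
proof (rule ccontr)
  assume "\<not> ?thesis"
  then have "N (indicator E :: 'a \<Rightarrow> real) = 0" by simp
  then have "AE x in M. (indicator E x :: real) = 0"
    using bfn_zero_iff[OF assms(1), of "indicator E"] assms(2) by simp
  then have "AE x in M. x \<notin> E" by (auto simp: indicator_def split: if_splits)
  then have "E \<in> null_sets M" using assms(2) by (simp add: AE_iff_null_sets)
  then show False using assms(3) by auto
qed

lemma ri_ind_eq:
  assumes "ri_space M N" "E \<in> sets M" "E' \<in> sets M" "emeasure M E = emeasure M E'"
  shows "N (indicator E :: 'a \<Rightarrow> real) = N (indicator E')"
proof -
  have eq: "{x\<in>space M. \<bar>indicator A x :: real\<bar> > s} =
      (if s < 0 then space M else if s < 1 then A else {})" if "A \<in> sets M" for A s
    using sets.sets_into_space[OF that] by (auto simp: indicator_def)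
  have "equimeasurable M (indicator E :: 'a \<Rightarrow> real) (indicator E')" unfolding equimeasurable_def
  proof
    fix s :: real
    show "emeasure M {x\<in>space M. \<bar>indicator E x :: real\<bar> > s} = emeasure M {x\<in>space M. \<bar>indicator E' x :: real\<bar> > s}"
      unfolding eq[OF assms(2)] eq[OF assms(3)] using assms(4) by simp
  qed
  then show ?thesis using assms(1-3) unfolding ri_space_def by auto
qed

lemma shift_bij:
  assumes "(j::nat) < n"
  shows "bij_betw (\<lambda>k. (j + k) mod n) {..<n} {..<n}"
proof (rule bij_betw_byWitness[where f'="\<lambda>k. (k + (n - j)) mod n"])
  show "\<forall>a\<in>{..<n}. ((j + a) mod n + (n - j)) mod n = a"
  proof
    fix a assume a: "a \<in> {..<n}"
    have "((j + a) mod n + (n - j)) mod n = (j + a + (n - j)) mod n" by (simp add: mod_add_left_eq)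
    also have "j + a + (n - j) = a + n" using assms by simp
    finally show "((j + a) mod n + (n - j)) mod n = a" using a by simp
  qed
  show "\<forall>a\<in>{..<n}. (j + (a + (n - j)) mod n) mod n = a"
  proof
    fix a assume a: "a \<in> {..<n}"
    have "(j + (a + (n - j)) mod n) mod n = (j + (a + (n - j))) mod n" by (simp add: mod_add_right_eq)
    also have "j + (a + (n - j)) = a + n" using assms by simp
    finally show "(j + (a + (n - j)) mod n) mod n = a" using a by simp
  qed
  show "(\<lambda>k. (j + k) mod n) ` {..<n} \<subseteq> {..<n}" using assms by auto
  show "(\<lambda>k. (k + (n - j)) mod n) ` {..<n} \<subseteq> {..<n}" using assms by auto
qed

lemma sum_shift:
  assumes "(j::nat) < n"
  shows "(\<Sum>k<n. c ((j + k) mod n)) = (\<Sum>k<n. (c k :: real))"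
  using sum.reindex_bij_betw[OF shift_bij[OF assms], of c] by simp

lemma perm_equimeasurable:
  fixes n :: nat and P :: "nat \<Rightarrow> 'a set" and c :: "nat \<Rightarrow> real"
  assumes P: "\<And>i. i < n \<Longrightarrow> P i \<in> sets M" "disjoint_family_on P {..<n}"
    and a: "\<And>i. i < n \<Longrightarrow> emeasure M (P i) = a"
    and c: "\<And>i. i < n \<Longrightarrow> c i \<ge> 0"
    and \<sigma>: "bij_betw \<sigma> {..<n} {..<n}"
  shows "equimeasurable M (\<lambda>x. \<Sum>i<n. c (\<sigma> i) * indicator (P i) x) (\<lambda>x. \<Sum>i<n. c i * indicator (P i) x)"
  unfolding equimeasurable_def
proof
  fix s :: real
  have Psp: "P i \<subseteq> space M" if "i < n" for i using sets.sets_into_space[OF P(1)[OF that]] .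
  have gen: "emeasure M {x\<in>space M. \<bar>\<Sum>i<n. d i * indicator (P i) x\<bar> > s} =
     (if s < 0 then emeasure M (space M) else (\<Sum>i<n. if d i > s then a else 0))"
    if d: "\<And>i. i < n \<Longrightarrow> d i \<ge> 0" for d
  proof (cases "s < 0")
    case True
    have "{x\<in>space M. \<bar>\<Sum>i<n. d i * indicator (P i) x\<bar> > s} = space M" using True by auto
    then show ?thesis using True by simp
  next
    case False
    have val: "(\<Sum>i<n. d i * indicator (P i) x) = (if \<exists>j<n. x \<in> P j then d (THE j. j < n \<and> x \<in> P j) else 0)" for x
    proof (cases "\<exists>j<n. x \<in> P j")
      case True
      then obtain j where j: "j < n" "x \<in> P j" by auto
      have "(THE j. j < n \<and> x \<in> P j) = j"
      proof (rule the_equality)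
        show "j < n \<and> x \<in> P j" using j by simp
        fix j' assume "j' < n \<and> x \<in> P j'"
        then show "j' = j" using j P(2) unfolding disjoint_family_on_def by blast
      qed
      moreover have "(\<Sum>i<n. d i * indicator (P i) x) = d j"
        by (rule sum_indicator_disjoint_family[OF P(2)]) (use j in auto)
      ultimately show ?thesis using True by simp
    next
      case False
      then have "(\<Sum>i<n. d i * indicator (P i) x) = (\<Sum>i<n. 0)" by (intro sum.cong) auto
      then have "(\<Sum>i<n. d i * indicator (P i) x) = 0" by simp
      then show ?thesis using False by (simp only: if_False)
    qed
    have "{x\<in>space M. \<bar>\<Sum>i<n. d i * indicator (P i) x\<bar> > s} = (\<Union>i\<in>{i\<in>{..<n}. d i > s}. P i)"
    proof (intro set_eqI iffI)
      fix x assume x: "x \<in> {x\<in>space M. \<bar>\<Sum>i<n. d i * indicator (P i) x\<bar> > s}"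
      show "x \<in> (\<Union>i\<in>{i\<in>{..<n}. d i > s}. P i)"
      proof (cases "\<exists>j<n. x \<in> P j")
        case True
        then obtain j where j: "j < n" "x \<in> P j" by auto
        have "(THE j. j < n \<and> x \<in> P j) = j"
        proof (rule the_equality)
          show "j < n \<and> x \<in> P j" using j by simp
          fix j' assume "j' < n \<and> x \<in> P j'"
          then show "j' = j" using j P(2) unfolding disjoint_family_on_def by blast
        qed
        then show ?thesis using x val[of x] True j d[of j] by auto
      next
        case False
        have eq: "(\<Sum>i<n. d i * indicator (P i) x) = 0" using False by (intro sum.neutral) auto
        have "s < \<bar>\<Sum>i<n. d i * indicator (P i) x\<bar>" using x by blast
        with eq show ?thesis using \<open>\<not> s < 0\<close> by linarith
      qed
    next
      fix x assume "x \<in> (\<Union>i\<in>{i\<in>{..<n}. d i > s}. P i)"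
      then obtain j where j: "j < n" "x \<in> P j" "d j > s" by auto
      have "(THE j. j < n \<and> x \<in> P j) = j"
      proof (rule the_equality)
        show "j < n \<and> x \<in> P j" using j by simp
        fix j' assume "j' < n \<and> x \<in> P j'"
        then show "j' = j" using j P(2) unfolding disjoint_family_on_def by blast
      qed
      then show "x \<in> {x\<in>space M. \<bar>\<Sum>i<n. d i * indicator (P i) x\<bar> > s}"
        using val[of x] j d[of j] Psp[of j] by auto
    qed
    also have "emeasure M \<dots> = (\<Sum>i\<in>{i\<in>{..<n}. d i > s}. emeasure M (P i))"
      by (rule sum_emeasure[symmetric]) (use P in \<open>auto simp: disjoint_family_on_def\<close>)
    also have "\<dots> = (\<Sum>i\<in>{i\<in>{..<n}. d i > s}. a)" using a by (intro sum.cong) auto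
    also have "\<dots> = (\<Sum>i<n. if d i > s then a else 0)" by (rule sum.inter_filter) simp
    finally show ?thesis using False by simp
  qed
  have "(\<Sum>i<n. if c (\<sigma> i) > s then a else 0) = (\<Sum>i<n. if c i > s then a else 0)"
    using sum.reindex_bij_betw[OF \<sigma>, of "\<lambda>i. if c i > s then a else 0"] by simp
  moreover have "c (\<sigma> i) \<ge> 0" if "i < n" for i using c \<sigma> that unfolding bij_betw_def by auto
  ultimately show "emeasure M {x\<in>space M. \<bar>\<Sum>i<n. c (\<sigma> i) * indicator (P i) x\<bar> > s} =
      emeasure M {x\<in>space M. \<bar>\<Sum>i<n. c i * indicator (P i) x\<bar> > s}"
    using gen[of "\<lambda>i. c (\<sigma> i)"] gen[of c] c by simp
qed


lemma sum_ind_val: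
  fixes P :: "nat \<Rightarrow> 'a set" and d :: "nat \<Rightarrow> real"
  assumes "disjoint_family_on P {..<n}"
  shows "(\<Sum>i<n. d i * indicator (P i) x) = (if \<exists>j<n. x \<in> P j then d (THE j. j < n \<and> x \<in> P j) else 0)"
proof (cases "\<exists>j<n. x \<in> P j")
  case True
  then obtain j where j: "j < n" "x \<in> P j" by auto
  have "(THE j. j < n \<and> x \<in> P j) = j"
  proof (rule the_equality)
    show "j < n \<and> x \<in> P j" using j by simp
    fix j' assume "j' < n \<and> x \<in> P j'"
    then show "j' = j" using j assms unfolding disjoint_family_on_def by blast
  qed
  moreover have "(\<Sum>i<n. d i * indicator (P i) x) = d j"
    by (rule sum_indicator_disjoint_family[OF assms]) (use j in auto)
  ultimately show ?thesis using True by simp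
next
  case False
  have "(\<Sum>i<n. d i * indicator (P i) x) = 0" using False by (intro sum.neutral) auto
  then show ?thesis using False by (simp only: if_False)
qed

lemma avg_core:
  fixes n :: nat and P :: "nat \<Rightarrow> 'a set" and c :: "nat \<Rightarrow> real" and h :: "'a \<Rightarrow> real"
  assumes ri: "ri_space M N" and n: "n > 0"
    and P: "\<And>i. i < n \<Longrightarrow> P i \<in> sets M" "disjoint_family_on P {..<n}"
    and a: "\<And>i. i < n \<Longrightarrow> emeasure M (P i) = a"
    and c: "\<And>i. i < n \<Longrightarrow> c i \<ge> 0"
    and h: "h \<in> borel_measurable M"
    and le: "AE x in M. \<forall>i<n. x \<in> P i \<longrightarrow> c i \<le> h x"
  shows "ennreal (\<Sum>i<n. c i) * N (indicator (\<Union>i<n. P i)) \<le> of_nat n * N h"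
proof -
  have bfn: "banach_function_norm M N" using ri unfolding ri_space_def by simp
  define sh where "sh k = (\<lambda>x. \<Sum>i<n. c ((i + k) mod n) * indicator (P i) x)" for k
  define h0 where "h0 = (\<lambda>x. \<Sum>i<n. c i * indicator (P i) x)"
  have msh: "sh k \<in> borel_measurable M" for k
    unfolding sh_def using P(1) by (intro borel_measurable_sum borel_measurable_times borel_measurable_const borel_measurable_indicator) auto
  have mh0: "h0 \<in> borel_measurable M"
    unfolding h0_def using P(1) by (intro borel_measurable_sum borel_measurable_times borel_measurable_const borel_measurable_indicator) auto
  have Usets: "(\<Union>i<n. P i) \<in> sets M" using P(1) by auto
  have eqk: "N (sh k) = N h0" if k: "k < n" for k
  proof -
    have "bij_betw (\<lambda>i. (i + k) mod n) {..<n} {..<n}" using shift_bij[OF k] by (simp add: add.commute)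
    from perm_equimeasurable[OF P a c this] have "equimeasurable M (sh k) h0"
      unfolding sh_def h0_def by simp
    then show ?thesis using ri msh mh0 unfolding ri_space_def by blast
  qed
  have sumk: "(\<lambda>x. \<Sum>k<n. sh k x) = (\<lambda>x. (\<Sum>i<n. c i) * indicator (\<Union>i<n. P i) x)"
  proof
    fix x
    show "(\<Sum>k<n. sh k x) = (\<Sum>i<n. c i) * indicator (\<Union>i<n. P i) x"
    proof (cases "\<exists>j<n. x \<in> P j")
      case True
      then obtain j where j: "j < n" "x \<in> P j" by auto
      have "sh k x = c ((j + k) mod n)" for k
        unfolding sh_def by (rule sum_indicator_disjoint_family[OF P(2)]) (use j in auto)
      then have "(\<Sum>k<n. sh k x) = (\<Sum>k<n. c ((j + k) mod n))" by simp
      also have "\<dots> = (\<Sum>i<n. c i)" by (rule sum_shift[OF j(1)])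
      finally show ?thesis using j by (auto simp: indicator_def)
    next
      case False
      then have "sh k x = 0" for k unfolding sh_def by (intro sum.neutral) auto
      then show ?thesis using False by (auto simp: indicator_def)
    qed
  qed
  have csum: "(\<Sum>i<n. c i) \<ge> 0" using c by (intro sum_nonneg) auto
  have "ennreal (\<Sum>i<n. c i) * N (indicator (\<Union>i<n. P i)) = N (\<lambda>x. (\<Sum>i<n. c i) * indicator (\<Union>i<n. P i) x)"
    using bfn_cmult[OF bfn, of "indicator (\<Union>i<n. P i)" "\<Sum>i<n. c i"] Usets csum by simp
  also have "\<dots> = N (\<lambda>x. \<Sum>k<n. sh k x)" using sumk by simp
  also have "\<dots> \<le> (\<Sum>k<n. N (sh k))" by (rule bfn_sum[OF bfn]) (use msh in auto)
  also have "\<dots> = (\<Sum>k<n. N h0)" using eqk by (intro sum.cong) auto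
  also have "\<dots> = of_nat n * N h0" by simp
  also have "\<dots> \<le> of_nat n * N h"
  proof (intro mult_left_mono)
    show "N h0 \<le> N h"
    proof (rule bfn_mono[OF bfn h mh0])
      show "AE x in M. \<bar>h0 x\<bar> \<le> \<bar>h x\<bar>"
        using le
      proof eventually_elim
        case (elim x)
        show ?case
        proof (cases "\<exists>j<n. x \<in> P j")
          case True
          then obtain j where j: "j < n" "x \<in> P j" by auto
          have "h0 x = c j" unfolding h0_def by (rule sum_indicator_disjoint_family[OF P(2)]) (use j in auto)
          then show ?thesis using elim j c[of j] by auto
        next
          case False
          then have "h0 x = 0" unfolding h0_def by (intro sum.neutral) auto
          then show ?thesis by simp
        qed
      qed
    qed
  qed simp
  finally show ?thesis .
qed

context finite_measure
begin

lemma small_subset_pow: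
  assumes na: "nonatomic M" and A: "A \<in> sets M" "measure M A > 0"
  shows "\<exists>B\<in>sets M. B \<subseteq> A \<and> 0 < measure M B \<and> measure M B \<le> measure M A / 2 ^ k"
proof (induction k)
  case 0
  then show ?case using A by auto
next
  case (Suc k)
  then obtain B where B: "B \<in> sets M" "B \<subseteq> A" "0 < measure M B" "measure M B \<le> measure M A / 2 ^ k"
    by auto
  then obtain C where C: "C \<in> sets M" "C \<subseteq> B" "0 < measure M C" "measure M C < measure M B"
    using na unfolding nonatomic_def by blast
  have d: "measure M (B - C) = measure M B - measure M C"
    using finite_measure_Diff C B by auto
  have h0: "measure M A / 2 ^ Suc k = (measure M A / 2 ^ k) / 2" by simp
  have h1: "measure M B / 2 \<le> (measure M A / 2 ^ k) / 2" using B(4) by (rule divide_right_mono) simp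
  note h = h0 h1
  show ?case
  proof (cases "measure M C \<le> measure M B / 2")
    case True
    then have "measure M C \<le> measure M A / 2 ^ Suc k" using B(4) h by linarith
    then show ?thesis using C B by blast
  next
    case False
    then have "measure M (B - C) \<le> measure M A / 2 ^ Suc k" "0 < measure M (B - C)"
      using B(4) h d C(4) by linarith+
    moreover have "B - C \<in> sets M" using B C by auto
    ultimately show ?thesis using B by blast
  qed
qed

lemma small_subset:
  assumes na: "nonatomic M" and A: "A \<in> sets M" "measure M A > 0" and e: "e > 0"
  shows "\<exists>B\<in>sets M. B \<subseteq> A \<and> 0 < measure M B \<and> measure M B < e"
proof -
  have "\<exists>k::nat. measure M A / e < 2 ^ k" by (rule real_arch_pow) simp
  then obtain k :: nat where k: "measure M A / e < 2 ^ k" by blast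
  then have "measure M A < 2 ^ k * e" using e by (simp add: divide_less_eq)
  then have lt: "measure M A / 2 ^ k < e" by (simp add: divide_less_eq mult.commute)
  obtain B where "B \<in> sets M" "B \<subseteq> A" "0 < measure M B" "measure M B \<le> measure M A / 2 ^ k"
    using small_subset_pow[OF assms(1-3), of k] by blast
  then show ?thesis using lt by (intro bexI[of _ B]) auto
qed


lemma sierpinski:
  assumes na: "nonatomic M" and B: "B \<in> sets M" and r: "0 \<le> r" "r \<le> measure M B"
  shows "\<exists>C\<in>sets M. C \<subseteq> B \<and> measure M C = r"
proof -
  define S where "S C = {measure M D | D. D \<in> sets M \<and> D \<subseteq> B - C \<and> measure M C + measure M D \<le> r}" for C
  define sv where "sv C = Sup (S C)" for C
  define P where "P C D \<longleftrightarrow> D \<in> sets M \<and> D \<subseteq> B - C \<and> measure M C + measure M D \<le> r \<and> sv C / 2 \<le> measure M D" for C D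
  define nxt where "nxt C = C \<union> (SOME D. P C D)" for C
  define Cs where "Cs k = (nxt ^^ k) {}" for k
  have bdd: "bdd_above (S C)" for C
    unfolding S_def by (rule bdd_aboveI[of _ "measure M (space M)"]) (auto intro: bounded_measure)
  have ex: "\<exists>D. P C D" if "C \<in> sets M" "measure M C \<le> r" for C
  proof (cases "sv C \<le> 0")
    case True
    then show ?thesis using that unfolding P_def by (intro exI[of _ "{}"]) auto
  next
    case False
    have ne: "S C \<noteq> {}" unfolding S_def using that by (auto intro!: exI[of _ "{}"])
    have "sv C / 2 < Sup (S C)" using False unfolding sv_def by simp
    then obtain y where "y \<in> S C" "sv C / 2 < y" using less_cSup_iff[OF ne bdd] by blast
    then show ?thesis unfolding P_def S_def by auto
  qed
  have inv: "Cs k \<in> sets M \<and> Cs k \<subseteq> B \<and> measure M (Cs k) \<le> r" for k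
  proof (induction k)
    case 0
    then show ?case using r by (simp add: Cs_def)
  next
    case (Suc k)
    have P: "P (Cs k) (SOME D. P (Cs k) D)" using ex[of "Cs k"] Suc by (auto intro: someI_ex)
    have eq: "Cs (Suc k) = Cs k \<union> (SOME D. P (Cs k) D)" by (simp add: Cs_def nxt_def)
    have "measure M (Cs (Suc k)) = measure M (Cs k) + measure M (SOME D. P (Cs k) D)"
      unfolding eq using P Suc unfolding P_def by (intro finite_measure_Union) auto
    then show ?case using P Suc unfolding eq P_def by auto
  qed
  have step: "measure M (Cs (Suc k)) = measure M (Cs k) + measure M (SOME D. P (Cs k) D)"
    and stepP: "P (Cs k) (SOME D. P (Cs k) D)"
    and stepeq: "Cs (Suc k) = Cs k \<union> (SOME D. P (Cs k) D)" for k
  proof -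
    show P: "P (Cs k) (SOME D. P (Cs k) D)" using ex[of "Cs k"] inv[of k] by (auto intro: someI_ex)
    show eq: "Cs (Suc k) = Cs k \<union> (SOME D. P (Cs k) D)" by (simp add: Cs_def nxt_def)
    show "measure M (Cs (Suc k)) = measure M (Cs k) + measure M (SOME D. P (Cs k) D)"
      unfolding eq using P inv[of k] unfolding P_def by (intro finite_measure_Union) auto
  qed
  have inc: "incseq Cs" by (rule incseq_SucI) (use stepeq in auto)
  define C where "C = (\<Union>k. Cs k)"
  have Csets: "C \<in> sets M" "C \<subseteq> B" using inv unfolding C_def by auto
  have lim: "(\<lambda>k. measure M (Cs k)) \<longlonglongrightarrow> measure M C"
    unfolding C_def using inv inc by (intro finite_Lim_measure_incseq) auto
  have le: "measure M C \<le> r"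
    by (rule LIMSEQ_le_const2[OF lim]) (use inv in auto)
  have "measure M C = r"
  proof (rule ccontr)
    assume "measure M C \<noteq> r"
    then have lt: "measure M C < r" using le by simp
    have "measure M (B - C) = measure M B - measure M C"
      using Csets B by (intro finite_measure_Diff) auto
    then have "measure M (B - C) > 0" using lt r by simp
    then obtain D where D: "D \<in> sets M" "D \<subseteq> B - C" "0 < measure M D" "measure M D < r - measure M C"
      using small_subset[OF na, of "B - C" "r - measure M C"] Csets B lt by auto
    have CsC: "measure M (Cs k) \<le> measure M C" for k
      using Csets unfolding C_def by (intro finite_measure_mono) auto
    have "measure M D \<le> sv (Cs k)" for k
      unfolding sv_def
    proof (rule cSup_upper[OF _ bdd])
      have "D \<subseteq> B - Cs k" using D unfolding C_def by auto
      moreover have "measure M (Cs k) + measure M D \<le> r" using CsC[of k] D by simp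
      ultimately show "measure M D \<in> S (Cs k)" unfolding S_def using D by auto
    qed
    then have grow: "measure M (Cs (Suc k)) \<ge> measure M (Cs k) + measure M D / 2" for k
      using step[of k] stepP[of k] unfolding P_def by (smt (verit) field_sum_of_halves)
    have lin: "measure M (Cs k) \<ge> real k * (measure M D / 2)" for k
    proof (induction k)
      case 0
      then show ?case by (simp add: Cs_def)
    next
      case (Suc k)
      then show ?case using grow[of k] by (simp add: algebra_simps)
    qed
    obtain k :: nat where "r / (measure M D / 2) < real k" using reals_Archimedean2 by blast
    then have "r < real k * (measure M D / 2)" using D(3) by (simp add: divide_less_eq)
    then show False using lin[of k] inv[of k] by simp
  qed
  then show ?thesis using Csets by blast
qed

lemma sierpinski_between:
  assumes na: "nonatomic M" and AB: "A \<in> sets M" "B \<in> sets M" "A \<subseteq> B"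
    and r: "measure M A \<le> r" "r \<le> measure M B"
  shows "\<exists>C\<in>sets M. A \<subseteq> C \<and> C \<subseteq> B \<and> measure M C = r"
proof -
  have d: "measure M (B - A) = measure M B - measure M A" using AB by (intro finite_measure_Diff) auto
  obtain C' where C': "C' \<in> sets M" "C' \<subseteq> B - A" "measure M C' = r - measure M A"
    using sierpinski[OF na, of "B - A" "r - measure M A"] AB r d by auto
  have "measure M (A \<union> C') = measure M A + measure M C'"
    using C' AB by (intro finite_measure_Union) auto
  then show ?thesis using C' AB by (intro bexI[of _ "A \<union> C'"]) auto
qed

end


lemma chain_exists:
  fixes h :: "'a \<Rightarrow> real" and n :: nat
  assumes ps: "prob_space M" and na: "nonatomic M" and E: "E \<in> sets M"
    and h: "h \<in> borel_measurable M" "finite (h ` space M)" "\<forall>x\<in>space M. 0 \<le> h x"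
    and n: "n > 0" and Epos: "measure M E > 0"
  shows "\<exists>S c. S 0 = {} \<and> (\<forall>k\<le>n. S k \<in> sets M \<and> measure M (S k) = real k * measure M E / real n \<and> S k \<subseteq> E)
     \<and> (\<forall>k<n. S k \<subseteq> S (Suc k))
     \<and> (\<forall>k<n. c k \<ge> 0 \<and> (\<forall>x\<in>S (Suc k). c k \<le> h x) \<and> (\<forall>x\<in>E - S (Suc k). h x \<le> c k))"
proof -
  interpret prob_space M by (rule ps)
  define t where "t = measure M E"
  define V where "V = insert 0 (h ` space M)"
  have Vfin: "finite V" using h(2) unfolding V_def by simp
  define L where "L v = {x\<in>space M. v \<le> h x} \<inter> E" for v
  define G where "G v = {x\<in>space M. v < h x} \<inter> E" for v
  have Lsets: "L v \<in> sets M" for v unfolding L_def using h(1) E by measurable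
  have Gsets: "G v \<in> sets M" for v unfolding G_def using h(1) E by measurable
  define f where "f v = measure M (L v)" for v
  define lam where "lam r = Max {v\<in>V. r \<le> f v}" for r
  have Esp: "E \<subseteq> space M" using E by (rule sets.sets_into_space)
  have L0: "L 0 = E" unfolding L_def using h(3) Esp by auto
  have setfin: "finite {v\<in>V. r \<le> f v}" for r using Vfin by simp
  have setne: "0 \<in> {v\<in>V. r \<le> f v}" if "r \<le> t" for r using that L0 unfolding V_def f_def t_def by simp
  have lamin: "lam r \<in> {v\<in>V. r \<le> f v}" if "r \<le> t" for r
    unfolding lam_def using setfin setne[OF that] by (intro Max_in) auto
  have lam0: "0 \<le> lam r" if "r \<le> t" for r
    unfolding lam_def using setfin setne[OF that] by (intro Max_ge) auto
  have P2: "r \<le> f (lam r)" if "r \<le> t" for r using lamin[OF that] by simp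
  have P4: "lam r' \<le> lam r" if "r \<le> r'" "r' \<le> t" for r r'
    unfolding lam_def using setfin setne[OF that(2)] that by (intro Max_mono) auto
  have P3: "measure M (G (lam r)) < r" if "0 < r" "r \<le> t" for r
  proof (cases "G (lam r) = {}")
    case True
    then show ?thesis using that by simp
  next
    case False
    define W where "W = {v\<in>V. lam r < v}"
    have Wfin: "finite W" using Vfin unfolding W_def by simp
    from False obtain x where x: "x \<in> G (lam r)" by auto
    then have "h x \<in> W" unfolding W_def V_def G_def by auto
    then have Wne: "W \<noteq> {}" by auto
    define v' where "v' = Min W"
    have v'W: "v' \<in> W" unfolding v'_def using Wfin Wne by (rule Min_in)
    have "G (lam r) = L v'"
    proof (intro set_eqI iffI)
      fix y assume y: "y \<in> G (lam r)"
      then have "h y \<in> W" unfolding W_def V_def G_def by auto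
      then have "v' \<le> h y" unfolding v'_def using Wfin by (intro Min_le)
      then show "y \<in> L v'" using y unfolding G_def L_def by auto
    next
      fix y assume "y \<in> L v'"
      then show "y \<in> G (lam r)" using v'W unfolding G_def L_def W_def by auto
    qed
    moreover have "\<not> r \<le> f v'"
    proof
      assume "r \<le> f v'"
      then have "v' \<in> {v\<in>V. r \<le> f v}" using v'W unfolding W_def by auto
      then have "v' \<le> lam r" unfolding lam_def using setfin by (intro Max_ge) auto
      then show False using v'W unfolding W_def by auto
    qed
    ultimately show ?thesis unfolding f_def by simp
  qed
  have hV: "h x \<le> Max V" if "x \<in> space M" for x using Vfin that unfolding V_def by (intro Max_ge) auto
  have lamt0: "lam 0 = Max V"
  proof -
    have "{v\<in>V. 0 \<le> f v} = V" unfolding f_def by auto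
    then show ?thesis unfolding lam_def by simp
  qed
  have G0: "G (lam 0) = {}" unfolding G_def lamt0 using hV by force
  have tpos: "0 \<le> t" unfolding t_def by simp
  have tE: "0 < t" unfolding t_def using Epos .
  define r where "r k = real k * t / real n" for k
  have r_le: "r k \<le> t" if "k \<le> n" for k
  proof -
    have "real k * t \<le> real n * t" by (rule mult_right_mono) (use that tpos in auto)
    then show ?thesis unfolding r_def using n by (simp add: divide_le_eq mult.commute)
  qed
  have r_mono: "r k \<le> r (Suc k)" for k unfolding r_def using tpos by (simp add: divide_right_mono mult_right_mono)
  define S where "S = rec_nat {} (\<lambda>k Sk. SOME C. C \<in> sets M \<and> Sk \<union> G (lam (r (Suc k))) \<subseteq> C \<and> C \<subseteq> L (lam (r (Suc k))) \<and> measure M C = r (Suc k))"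
  have S0: "S 0 = {}" unfolding S_def by simp
  have SSuc: "S (Suc k) = (SOME C. C \<in> sets M \<and> S k \<union> G (lam (r (Suc k))) \<subseteq> C \<and> C \<subseteq> L (lam (r (Suc k))) \<and> measure M C = r (Suc k))" for k
    unfolding S_def by simp
  define I where "I k \<longleftrightarrow> S k \<in> sets M \<and> measure M (S k) = r k \<and> S k \<subseteq> L (lam (r k)) \<and> G (lam (r k)) \<subseteq> S k" for k
  have exC: "\<exists>C. C \<in> sets M \<and> S k \<union> G (lam (r (Suc k))) \<subseteq> C \<and> C \<subseteq> L (lam (r (Suc k))) \<and> measure M C = r (Suc k)"
    if k: "k < n" and Ik: "I k" for k
  proof -
    have IH: "S k \<in> sets M" "measure M (S k) = r k" "S k \<subseteq> L (lam (r k))" "G (lam (r k)) \<subseteq> S k"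
      using Ik unfolding I_def by auto
    define l' where "l' = lam (r (Suc k))"
    have rt: "r (Suc k) \<le> t" using r_le k by simp
    have rpos: "0 < r (Suc k)" unfolding r_def using n tE by simp
    have ll: "l' \<le> lam (r k)" unfolding l'_def by (rule P4[OF r_mono rt])
    have Lmono: "L a \<subseteq> L b" if "b \<le> a" for a b unfolding L_def using that by auto
    have AB: "S k \<union> G l' \<subseteq> L l'" using IH(3) Lmono[OF ll] unfolding G_def L_def by auto
    have mA: "measure M (S k \<union> G l') \<le> r (Suc k)"
    proof (cases "l' = lam (r k)")
      case True
      then have "S k \<union> G l' = S k" using IH(4) by auto
      then show ?thesis using IH(2) r_mono[of k] by simp
    next
      case False
      then have "l' < lam (r k)" using ll by simp
      then have "S k \<subseteq> G l'" using IH(3) unfolding L_def G_def by auto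
      then have "S k \<union> G l' = G l'" by auto
      then show ?thesis using P3[OF rpos rt] unfolding l'_def by simp
    qed
    have mB: "r (Suc k) \<le> measure M (L l')" using P2[OF rt] unfolding l'_def f_def by simp
    have "\<exists>C\<in>sets M. S k \<union> G l' \<subseteq> C \<and> C \<subseteq> L l' \<and> measure M C = r (Suc k)"
      using sierpinski_between[OF na _ Lsets AB mA mB] IH(1) Gsets by auto
    then show ?thesis unfolding l'_def by blast
  qed
  have inv: "I k" if "k \<le> n" for k
    using that
  proof (induction k)
    case 0
    then show ?case using G0 unfolding I_def by (simp add: S0 r_def)
  next
    case (Suc k)
    then have "I k" by simp
    from someI_ex[OF exC[OF _ this]] Suc(2)
    show ?case unfolding I_def SSuc[symmetric] by auto
  qed
  have Smono: "S k \<subseteq> S (Suc k)" if "k < n" for k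
    using someI_ex[OF exC[OF that inv]] that unfolding SSuc[symmetric] by auto
  show ?thesis
  proof (intro exI[of _ S] exI[of _ "\<lambda>k. lam (r (Suc k))"] conjI allI impI ballI)
    show "S 0 = {}" by (rule S0)
    fix k assume k: "k \<le> n"
    show "S k \<in> sets M" using inv[OF k] unfolding I_def by simp
    show "measure M (S k) = real k * measure M E / real n" using inv[OF k] unfolding I_def r_def t_def by simp
    show "S k \<subseteq> E" using inv[OF k] unfolding I_def L_def by auto
  next
    fix k assume k: "k < n"
    show "S k \<subseteq> S (Suc k)" using Smono[OF k] .
    show "0 \<le> lam (r (Suc k))" using lam0 r_le k by simp
    fix x assume "x \<in> S (Suc k)"
    then show "lam (r (Suc k)) \<le> h x" using inv[of "Suc k"] k unfolding I_def L_def by auto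
  next
    fix k x assume k: "k < n" and x: "x \<in> E - S (Suc k)"
    then show "h x \<le> lam (r (Suc k))" using inv[of "Suc k"] Esp unfolding I_def G_def by fastforce
  qed
qed


lemma avg_simple_nonatomic:
  fixes h :: "'a \<Rightarrow> real"
  assumes ri: "ri_space M N" and ps: "prob_space M" and na: "nonatomic M" and E: "E \<in> sets M"
    and Epos: "measure M E > 0"
    and h: "h \<in> borel_measurable M" "finite (h ` space M)" "\<forall>x\<in>space M. 0 \<le> h x" "\<forall>x\<in>space M - E. h x = 0"
  shows "(\<integral>\<^sup>+x. ennreal (h x) \<partial>M) * N (indicator E) \<le> ennreal (measure M E) * N h"
proof -
  interpret prob_space M by (rule ps)
  have bfn: "banach_function_norm M N" using ri unfolding ri_space_def by simp
  define t where "t = measure M E"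
  have tpos: "t > 0" using Epos unfolding t_def .
  have "emeasure M E < \<top>" using emeasure_finite[of E] less_top by blast
  then have "N (indicator E) < \<infinity>" using bfn_ind_fin[OF bfn E] by simp
  then obtain \<phi> where phi: "\<phi> \<ge> 0" "N (indicator E) = ennreal \<phi>" using less_top_ennreal by auto
  define H where "H = Max (insert 0 (h ` space M))"
  have H0: "0 \<le> H" unfolding H_def using h(2) by (intro Max_ge) auto
  have hH: "h x \<le> H" if "x \<in> space M" for x unfolding H_def using h(2) that by (intro Max_ge) auto
  have Esp: "E \<subseteq> space M" using E by (rule sets.sets_into_space)
  have key: "(\<integral>\<^sup>+x. ennreal (h x) \<partial>M) * N (indicator E) \<le> ennreal t * N h + ennreal (H * t * \<phi> / real n)"
    if n: "n > 0" for n
  proof -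
    obtain S c where S0: "S 0 = {}"
      and Sk: "\<And>k. k \<le> n \<Longrightarrow> S k \<in> sets M \<and> measure M (S k) = real k * measure M E / real n \<and> S k \<subseteq> E"
      and Smono: "\<And>k. k < n \<Longrightarrow> S k \<subseteq> S (Suc k)"
      and ck: "\<And>k. k < n \<Longrightarrow> c k \<ge> 0 \<and> (\<forall>x\<in>S (Suc k). c k \<le> h x) \<and> (\<forall>x\<in>E - S (Suc k). h x \<le> c k)"
      using chain_exists[OF ps na E h(1,2,3) n Epos] by blast
    have Sle: "S i \<subseteq> S j" if "i \<le> j" "j \<le> n" for i j
      using that
    proof (induction j)
      case 0
      then show ?case by simp
    next
      case (Suc j)
      show ?case
      proof (cases "i = Suc j")
        case True
        then show ?thesis by simp
      next
        case False
        then have "S i \<subseteq> S j" using Suc by simp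
        also have "\<dots> \<subseteq> S (Suc j)" using Smono Suc by simp
        finally show ?thesis .
      qed
    qed
    define P where "P i = S (Suc i) - S i" for i
    have Psets: "P i \<in> sets M" if "i < n" for i unfolding P_def using Sk[of i] Sk[of "Suc i"] that by auto
    have Pdisj: "disjoint_family_on P {..<n}"
      unfolding disjoint_family_on_def
    proof (intro ballI impI)
      fix i j assume ij: "i \<in> {..<n}" "j \<in> {..<n}" "i \<noteq> j"
      have aux: "P i \<inter> P j = {}" if "i < j" "j < n" for i j
      proof -
        have "P i \<subseteq> S j" unfolding P_def using Sle[of "Suc i" j] that by auto
        then show ?thesis unfolding P_def by auto
      qed
      show "P i \<inter> P j = {}"
      proof (cases "i < j")
        case True then show ?thesis using aux ij by auto
      next
        case False then have "j < i" using ij by simp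
        then show ?thesis using aux[of j i] ij by auto
      qed
    qed
    have Pmeas: "emeasure M (P i) = ennreal (t / real n)" if "i < n" for i
    proof -
      have "measure M (P i) = measure M (S (Suc i)) - measure M (S i)"
        unfolding P_def using Sk[of i] Sk[of "Suc i"] Smono[of i] that by (intro finite_measure_Diff) auto
      also have "\<dots> = t / real n" using Sk[of i] Sk[of "Suc i"] that unfolding t_def by (simp add: field_simps)
      finally show ?thesis by (simp add: emeasure_eq_measure)
    qed
    have Pun: "(\<Union>i<m. P i) = S m" if "m \<le> n" for m
      using that
    proof (induction m)
      case 0
      then show ?case using S0 by simp
    next
      case (Suc m)
      have "(\<Union>i<Suc m. P i) = (\<Union>i<m. P i) \<union> P m" by (simp add: lessThan_Suc Un_commute)
      also have "\<dots> = S m \<union> (S (Suc m) - S m)" using Suc unfolding P_def by simp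
      also have "\<dots> = S (Suc m)" using Smono[of m] Suc by auto
      finally show ?case .
    qed
    have Sn: "S n \<in> sets M" "measure M (S n) = t" "S n \<subseteq> E" using Sk[of n] n unfolding t_def by auto
    have NSn: "N (indicator (S n)) = N (indicator E)"
      by (rule ri_ind_eq[OF ri Sn(1) E]) (simp add: emeasure_eq_measure Sn(2) t_def)
    have core: "ennreal (\<Sum>i<n. c i) * N (indicator (\<Union>i<n. P i)) \<le> of_nat n * N h"
    proof (rule avg_core[OF ri n Psets Pdisj Pmeas _ h(1)])
      show "\<And>i. i < n \<Longrightarrow> 0 \<le> c i" using ck by blast
      show "AE x in M. \<forall>i<n. x \<in> P i \<longrightarrow> c i \<le> h x"
        using ck unfolding P_def by auto
    qed auto
    then have core': "ennreal (\<Sum>i<n. c i) * ennreal \<phi> \<le> of_nat n * N h"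
      using Pun[of n] NSn phi by simp
    define bnd where "bnd i = (if i = 0 then H else c (i - 1))" for i
    have bnd0: "0 \<le> bnd i" if "i < n" for i using H0 ck that unfolding bnd_def by auto
    have ESn: "emeasure M (E - S n) = 0"
    proof -
      have "measure M (E - S n) = measure M E - measure M (S n)" using Sn E by (intro finite_measure_Diff) auto
      then show ?thesis using Sn unfolding t_def by (simp add: emeasure_eq_measure)
    qed
    have pw: "ennreal (h x) \<le> (\<Sum>i<n. ennreal (bnd i) * indicator (P i) x) + ennreal H * indicator (E - S n) x"
      if x: "x \<in> space M" for x
    proof (cases "x \<in> E")
      case False
      then show ?thesis using h(4) x by simp
    next
      case True
      show ?thesis
      proof (cases "x \<in> S n")
        case False
        then have "ennreal (h x) \<le> ennreal H * indicator (E - S n) x" using True hH[OF x] by (simp add: ennreal_leI)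
        then show ?thesis by (simp add: add_increasing)
      next
        case xS: True
        then obtain j where j: "j < n" "x \<in> P j" using Pun[of n] by auto
        have sj: "(\<Sum>i<n. ennreal (bnd i) * indicator (P i) x) = ennreal (bnd j)"
          by (rule sum_indicator_disjoint_family[OF Pdisj]) (use j in auto)
        have "h x \<le> bnd j"
        proof (cases j)
          case 0
          then show ?thesis using hH[OF x] unfolding bnd_def by simp
        next
          case (Suc i)
          then have "x \<in> E - S (Suc i)" using j True unfolding P_def by auto
          then show ?thesis using ck[of i] Suc j unfolding bnd_def by auto
        qed
        then show ?thesis unfolding sj by (simp add: ennreal_leI add_increasing2)
      qed
    qed
    have Cnn: "0 \<le> (\<Sum>i<n. c i)" using ck by (intro sum_nonneg) auto
    have "(\<integral>\<^sup>+x. ennreal (h x) \<partial>M) \<le> (\<integral>\<^sup>+x. (\<Sum>i<n. ennreal (bnd i) * indicator (P i) x) + ennreal H * indicator (E - S n) x \<partial>M)"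
      by (rule nn_integral_mono) (rule pw)
    also have "\<dots> = (\<integral>\<^sup>+x. (\<Sum>i<n. ennreal (bnd i) * indicator (P i) x) \<partial>M) + (\<integral>\<^sup>+x. ennreal H * indicator (E - S n) x \<partial>M)"
    proof (rule nn_integral_add)
      show "(\<lambda>x. \<Sum>i<n. ennreal (bnd i) * indicator (P i) x) \<in> borel_measurable M"
        using Psets by (intro borel_measurable_sum borel_measurable_times_ennreal borel_measurable_const borel_measurable_indicator) auto
      show "(\<lambda>x. ennreal H * indicator (E - S n) x) \<in> borel_measurable M"
        using Sn E by (intro borel_measurable_times_ennreal borel_measurable_const borel_measurable_indicator) auto
    qed
    also have "\<dots> = (\<Sum>i<n. ennreal (bnd i) * emeasure M (P i)) + ennreal H * emeasure M (E - S n)"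
    proof -
      have "(\<integral>\<^sup>+x. (\<Sum>i<n. ennreal (bnd i) * indicator (P i) x) \<partial>M) = (\<Sum>i<n. (\<integral>\<^sup>+x. ennreal (bnd i) * indicator (P i) x \<partial>M))"
        using Psets by (intro nn_integral_sum borel_measurable_times_ennreal borel_measurable_const borel_measurable_indicator) auto
      also have "\<dots> = (\<Sum>i<n. ennreal (bnd i) * emeasure M (P i))"
        using Psets by (intro sum.cong refl nn_integral_cmult_indicator) auto
      finally have 1: "(\<integral>\<^sup>+x. (\<Sum>i<n. ennreal (bnd i) * indicator (P i) x) \<partial>M) = (\<Sum>i<n. ennreal (bnd i) * emeasure M (P i))" .
      have 2: "(\<integral>\<^sup>+x. ennreal H * indicator (E - S n) x \<partial>M) = ennreal H * emeasure M (E - S n)"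
        using Sn E by (intro nn_integral_cmult_indicator) auto
      show ?thesis unfolding 1 2 ..
    qed
    also have "\<dots> = (\<Sum>i<n. ennreal (bnd i * (t / real n)))"
    proof -
      have "(\<Sum>i<n. ennreal (bnd i) * emeasure M (P i)) = (\<Sum>i<n. ennreal (bnd i * (t / real n)))"
      proof (rule sum.cong[OF refl])
        fix i assume i: "i \<in> {..<n}"
        show "ennreal (bnd i) * emeasure M (P i) = ennreal (bnd i * (t / real n))"
          unfolding Pmeas[of i, OF lessThan_iff[THEN iffD1, OF i]]
          by (rule ennreal_mult[symmetric]) (use bnd0[of i] i tpos in auto)
      qed
      then show ?thesis using ESn by simp
    qed
    also have "\<dots> = ennreal ((\<Sum>i<n. bnd i) * (t / real n))"
    proof -
      have "(\<Sum>i<n. ennreal (bnd i * (t / real n))) = ennreal (\<Sum>i<n. bnd i * (t / real n))"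
        by (rule sum_ennreal) (use bnd0 tpos in auto)
      also have "(\<Sum>i<n. bnd i * (t / real n)) = (\<Sum>i<n. bnd i) * (t / real n)"
        by (rule sum_distrib_right[symmetric])
      finally show ?thesis .
    qed
    also have "\<dots> \<le> ennreal ((H + (\<Sum>i<n. c i)) * (t / real n))"
    proof (intro ennreal_leI mult_right_mono)
      obtain m where m: "n = Suc m" using n by (cases n) auto
      have "(\<Sum>i<n. bnd i) = H + (\<Sum>i<m. c i)" unfolding m sum.lessThan_Suc_shift bnd_def by simp
      also have "\<dots> \<le> H + (\<Sum>i<n. c i)" unfolding m using ck[of m] m by simp
      finally show "(\<Sum>i<n. bnd i) \<le> H + (\<Sum>i<n. c i)" .
    qed (use tpos in simp)
    finally have int: "(\<integral>\<^sup>+x. ennreal (h x) \<partial>M) \<le> ennreal ((H + (\<Sum>i<n. c i)) * (t / real n))" .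
    have "(\<integral>\<^sup>+x. ennreal (h x) \<partial>M) * N (indicator E) \<le> ennreal ((H + (\<Sum>i<n. c i)) * (t / real n)) * ennreal \<phi>"
      using int phi by (simp add: mult_right_mono)
    also have "\<dots> = ennreal (H * t * \<phi> / real n) + ennreal (t / real n) * (ennreal (\<Sum>i<n. c i) * ennreal \<phi>)"
    proof -
      define C where "C = (\<Sum>i<n. c i)"
      have tn: "0 \<le> t / real n" using tpos by simp
      have e1: "ennreal ((H + C) * (t / real n)) * ennreal \<phi> = ennreal ((H + C) * (t / real n) * \<phi>)"
      proof (rule ennreal_mult[symmetric])
        show "0 \<le> (H + C) * (t / real n)" by (rule mult_nonneg_nonneg) (use H0 Cnn tn in \<open>auto simp: C_def\<close>)
      qed (use phi in auto)
      have e2: "ennreal C * ennreal \<phi> = ennreal (C * \<phi>)"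
        by (rule ennreal_mult[symmetric]) (use Cnn phi in \<open>auto simp: C_def\<close>)
      have e2': "ennreal (t / real n) * ennreal (C * \<phi>) = ennreal (t / real n * (C * \<phi>))"
        by (rule ennreal_mult[symmetric]) (use Cnn phi tn in \<open>auto simp: C_def\<close>)
      have e3: "ennreal (H * t * \<phi> / real n) + ennreal (t / real n * (C * \<phi>)) = ennreal (H * t * \<phi> / real n + t / real n * (C * \<phi>))"
        by (rule ennreal_plus[symmetric]) (use H0 Cnn phi tpos in \<open>auto simp: C_def\<close>)
      have e4: "(H + C) * (t / real n) * \<phi> = H * t * \<phi> / real n + t / real n * (C * \<phi>)"
        using n by (simp add: field_simps)
      show ?thesis unfolding C_def[symmetric] e1 e2 e2' e3 e4 ..
    qed
    also have "\<dots> \<le> ennreal (H * t * \<phi> / real n) + ennreal (t / real n) * (of_nat n * N h)"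
      by (intro add_left_mono mult_left_mono core') simp
    also have "ennreal (t / real n) * (of_nat n * N h) = ennreal t * N h"
    proof -
      have "ennreal (t / real n) * of_nat n = ennreal t"
        using tpos n by (simp add: ennreal_of_nat_eq_real_of_nat ennreal_mult[symmetric])
      then show ?thesis by (simp add: mult.assoc[symmetric])
    qed
    finally show ?thesis by (simp add: add.commute)
  qed
  show ?thesis
  proof (cases "N h = \<top>")
    case True
    then show ?thesis using tpos unfolding t_def by (simp add: ennreal_mult_eq_top_iff)
  next
    case False
    show ?thesis unfolding t_def[symmetric]
    proof (rule ennreal_le_epsilon)
      fix e :: real assume e: "0 < e"
      obtain n :: nat where nbig: "H * t * \<phi> / e < real n" using reals_Archimedean2 by blast
      have npos: "n > 0" using nbig H0 tpos phi e
        by (metis divide_nonneg_pos mult_nonneg_nonneg not_gr_zero of_nat_0 order.strict_iff_not order_less_le_trans) 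
      have "H * t * \<phi> < real n * e" using nbig e by (simp add: divide_less_eq)
      then have "H * t * \<phi> / real n \<le> e" using npos by (simp add: divide_le_eq mult.commute)
      then have "ennreal (H * t * \<phi> / real n) \<le> ennreal e" by (rule ennreal_leI)
      then show "(\<integral>\<^sup>+x. ennreal (h x) \<partial>M) * N (indicator E) \<le> ennreal t * N h + ennreal e"
        using key[OF npos] by (meson add_left_mono order_trans)
    qed
  qed
qed


lemma atom_const:
  fixes h :: "'a \<Rightarrow> real"
  assumes fm: "finite_measure M" and A: "A \<in> sets M" "measure M A > 0"
    and at: "\<forall>B\<in>sets M. B \<subseteq> A \<longrightarrow> measure M B = 0 \<or> measure M B = measure M A"
    and h: "h \<in> borel_measurable M" "finite (h ` space M)"
  shows "\<exists>v\<in>h ` A. AE x in M. x \<in> A \<longrightarrow> h x = v"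
proof (rule ccontr)
  interpret finite_measure M by (rule fm)
  assume nex: "\<not> ?thesis"
  have Asp: "A \<subseteq> space M" using A(1) by (rule sets.sets_into_space)
  define Z where "Z v = A \<inter> {x\<in>space M. h x = v}" for v
  have Zsets: "Z v \<in> sets M" for v unfolding Z_def using A(1) h(1) by measurable
  have Znull: "Z v \<in> null_sets M" if v: "v \<in> h ` A" for v
  proof -
    have "measure M (Z v) = 0 \<or> measure M (Z v) = measure M A" using at Zsets[of v] unfolding Z_def by auto
    moreover have "measure M (Z v) \<noteq> measure M A"
    proof
      assume eq: "measure M (Z v) = measure M A"
      have "measure M (A - Z v) = measure M A - measure M (Z v)"
        using A(1) Zsets by (intro finite_measure_Diff) (auto simp: Z_def)
      then have "measure M (A - Z v) = 0" using eq by simp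
      then have null: "A - Z v \<in> null_sets M" using A(1) Zsets
        by (simp add: emeasure_eq_measure null_sets_def)
      have "AE x in M. x \<in> A \<longrightarrow> h x = v"
        by (rule AE_I'[OF null]) (auto simp: Z_def)
      then show False using nex v by blast
    qed
    ultimately have "measure M (Z v) = 0" by simp
    then show ?thesis using Zsets by (simp add: emeasure_eq_measure null_sets_def)
  qed
  have "A = (\<Union>v\<in>h ` A. Z v)" unfolding Z_def using Asp by auto
  also have "\<dots> \<in> null_sets M"
  proof (rule null_sets.finite_UN)
    show "finite (h ` A)" using h(2) Asp by (meson finite_subset image_mono)
  qed (use Znull in auto)
  finally have "A \<in> null_sets M" .
  then show False using A(2) by (simp add: emeasure_eq_measure null_sets_def)
qed


lemma avg_simple_atomic:
  fixes h :: "'a \<Rightarrow> real"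
  assumes ri: "ri_space M N" and ps: "prob_space M" and ea: "equal_atomic M" and E: "E \<in> sets M"
    and Epos: "measure M E > 0"
    and h: "h \<in> borel_measurable M" "finite (h ` space M)" "\<forall>x\<in>space M. 0 \<le> h x" "\<forall>x\<in>space M - E. h x = 0"
  shows "(\<integral>\<^sup>+x. ennreal (h x) \<partial>M) * N (indicator E) \<le> ennreal (measure M E) * N h"
proof -
  interpret prob_space M by (rule ps)
  have bfn: "banach_function_norm M N" using ri unfolding ri_space_def by simp
  have Esp: "E \<subseteq> space M" using E by (rule sets.sets_into_space)
  obtain m :: nat and A where m: "m > 0"
    and At: "\<And>i. i < m \<Longrightarrow> is_atom M (A i) \<and> measure M (A i) = 1 / real m"
    and Ad: "disjoint_family_on A {..<m}" and Au: "(\<Union>i<m. A i) = space M"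
    using ea unfolding equal_atomic_def by blast
  have Asets: "A i \<in> sets M" if "i < m" for i using At[OF that] unfolding is_atom_def by simp
  have EA: "measure M (E \<inter> A i) = 0 \<or> measure M (E \<inter> A i) = 1 / real m" if i: "i < m" for i
  proof -
    have "E \<inter> A i \<in> sets M" using E Asets[OF i] by auto
    then show ?thesis using At[OF i] unfolding is_atom_def by auto
  qed
  define I where "I = {i\<in>{..<m}. measure M (E \<inter> A i) \<noteq> 0}"
  define k where "k = card I"
  have Ifin: "finite I" unfolding I_def by simp
  obtain e where e: "bij_betw e {..<k} I"
    using ex_bij_betw_nat_finite[OF Ifin] unfolding k_def by (auto simp: lessThan_atLeast0)
  have eI: "e j \<in> I" if "j < k" for j using e that unfolding bij_betw_def by auto
  have em: "e j < m" if "j < k" for j using eI[OF that] unfolding I_def by auto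
  have einj: "e j \<noteq> e j'" if "j < k" "j' < k" "j \<noteq> j'" for j j'
    using e that unfolding bij_betw_def inj_on_def by auto
  have Emeas: "measure M E = real k / real m"
  proof -
    have Eeq: "E = (\<Union>i\<in>{..<m}. E \<inter> A i)" using Au Esp by auto
    have "measure M (\<Union>i\<in>{..<m}. E \<inter> A i) = (\<Sum>i\<in>{..<m}. measure M (E \<inter> A i))"
    proof (rule finite_measure_finite_Union)
      show "(\<lambda>i. E \<inter> A i) ` {..<m} \<subseteq> events" using E Asets by auto
      show "disjoint_family_on (\<lambda>i. E \<inter> A i) {..<m}" using Ad unfolding disjoint_family_on_def by blast
    qed simp
    then have "measure M E = (\<Sum>i\<in>{..<m}. measure M (E \<inter> A i))" using Eeq by simp
    also have "\<dots> = (\<Sum>i\<in>{..<m}. if i \<in> I then 1 / real m else 0)"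
      using EA unfolding I_def by (intro sum.cong) auto
    also have "\<dots> = (\<Sum>i\<in>I. 1 / real m)"
      unfolding I_def by (subst sum.inter_filter[symmetric]) auto
    also have "\<dots> = real k / real m" unfolding k_def by simp
    finally show ?thesis .
  qed
  have kpos: "k > 0" using Epos Emeas by (cases k) auto
  define P where "P j = E \<inter> A (e j)" for j
  have Psets: "P j \<in> sets M" if "j < k" for j unfolding P_def using E Asets[OF em[OF that]] by auto
  have Pm: "measure M (P j) = 1 / real m" if "j < k" for j
    using EA[OF em[OF that]] eI[OF that] unfolding P_def I_def by auto
  have Pmeas: "emeasure M (P j) = ennreal (1 / real m)" if "j < k" for j
    using Pm[OF that] by (simp add: emeasure_eq_measure)
  have Pdisj: "disjoint_family_on P {..<k}"
    unfolding disjoint_family_on_def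
  proof (intro ballI impI)
    fix j j' assume "j \<in> {..<k}" "j' \<in> {..<k}" "j \<noteq> j'"
    then have "e j \<noteq> e j'" "e j \<in> {..<m}" "e j' \<in> {..<m}" using einj em by auto
    then have "A (e j) \<inter> A (e j') = {}" using Ad unfolding disjoint_family_on_def by blast
    then show "P j \<inter> P j' = {}" unfolding P_def by auto
  qed
  have Patom: "\<forall>B\<in>sets M. B \<subseteq> P j \<longrightarrow> measure M B = 0 \<or> measure M B = measure M (P j)" if j: "j < k" for j
  proof (intro ballI impI)
    fix B assume "B \<in> sets M" "B \<subseteq> P j"
    then have "B \<subseteq> A (e j)" unfolding P_def by auto
    then show "measure M B = 0 \<or> measure M B = measure M (P j)"
      using At[OF em[OF j]] \<open>B \<in> sets M\<close> Pm[OF j] unfolding is_atom_def by auto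
  qed
  have "\<forall>j. \<exists>v. j < k \<longrightarrow> v \<in> h ` P j \<and> (AE x in M. x \<in> P j \<longrightarrow> h x = v)"
  proof
    fix j
    show "\<exists>v. j < k \<longrightarrow> v \<in> h ` P j \<and> (AE x in M. x \<in> P j \<longrightarrow> h x = v)"
    proof (cases "j < k")
      case True
      have "measure M (P j) > 0" using Pm[OF True] m by simp
      from atom_const[OF _ Psets[OF True] this Patom[OF True] h(1,2)] show ?thesis
        using finite_measure_axioms by blast
    qed simp
  qed
  then obtain c where c: "\<And>j. j < k \<Longrightarrow> c j \<in> h ` P j \<and> (AE x in M. x \<in> P j \<longrightarrow> h x = c j)"
    by metis
  have c0: "0 \<le> c j" if jk: "j < k" for j
  proof -
    have "c j \<in> h ` P j" using c[OF jk] by blast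
    then obtain x where x: "x \<in> P j" "c j = h x" by blast
    have "P j \<subseteq> space M" using Psets[OF jk] by (rule sets.sets_into_space)
    then have "x \<in> space M" using x(1) by blast
    then show ?thesis using h(3) x(2) by simp
  qed
  have AEc: "AE x in M. \<forall>j<k. x \<in> P j \<longrightarrow> h x = c j"
  proof -
    have "\<forall>j\<in>{..<k}. AE x in M. x \<in> P j \<longrightarrow> h x = c j" using c by auto
    then have "AE x in M. \<forall>j\<in>{..<k}. x \<in> P j \<longrightarrow> h x = c j" by (subst AE_finite_all) auto
    then show ?thesis by auto
  qed
  have AEle: "AE x in M. \<forall>j<k. x \<in> P j \<longrightarrow> c j \<le> h x" using AEc by eventually_elim auto
  have core: "ennreal (\<Sum>j<k. c j) * N (indicator (\<Union>j<k. P j)) \<le> of_nat k * N h"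
    by (rule avg_core[OF ri kpos Psets Pdisj Pmeas c0 h(1) AEle])
  have Um: "measure M (\<Union>j<k. P j) = real k / real m"
  proof -
    have "measure M (\<Union>j<k. P j) = (\<Sum>j<k. measure M (P j))"
      using Psets Pdisj by (intro finite_measure_finite_Union) auto
    also have "\<dots> = real k / real m" using Pm by simp
    finally show ?thesis .
  qed
  have Usets: "(\<Union>j<k. P j) \<in> sets M" using Psets by auto
  have Usub: "(\<Union>j<k. P j) \<subseteq> E" unfolding P_def by auto
  have NU: "N (indicator (\<Union>j<k. P j)) = N (indicator E)"
    by (rule ri_ind_eq[OF ri Usets E]) (simp add: emeasure_eq_measure Um Emeas)
  have nullD: "E - (\<Union>j<k. P j) \<in> null_sets M"
  proof -
    have "measure M (E - (\<Union>j<k. P j)) = measure M E - measure M (\<Union>j<k. P j)"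
      using E Usets Usub by (intro finite_measure_Diff) auto
    then have "measure M (E - (\<Union>j<k. P j)) = 0" using Um Emeas by simp
    then show ?thesis using E Usets by (simp add: emeasure_eq_measure null_sets_def)
  qed
  have AEeq: "AE x in M. ennreal (h x) = (\<Sum>j<k. ennreal (c j) * indicator (P j) x)"
    using AEc AE_not_in[OF nullD] AE_space
  proof eventually_elim
    case (elim x)
    show ?case
    proof (cases "\<exists>j<k. x \<in> P j")
      case True
      then obtain j where j: "j < k" "x \<in> P j" by auto
      have "(\<Sum>j<k. ennreal (c j) * indicator (P j) x) = ennreal (c j)"
        by (rule sum_indicator_disjoint_family[OF Pdisj]) (use j in auto)
      then show ?thesis using elim j by simp
    next
      case False
      then have "x \<notin> E" using elim by auto
      then have "h x = 0" using h(4) elim by auto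
      moreover have "(\<Sum>j<k. ennreal (c j) * indicator (P j) x) = 0" using False by (intro sum.neutral) auto
      ultimately show ?thesis by simp
    qed
  qed
  have "(\<integral>\<^sup>+x. ennreal (h x) \<partial>M) = (\<integral>\<^sup>+x. (\<Sum>j<k. ennreal (c j) * indicator (P j) x) \<partial>M)"
    by (rule nn_integral_cong_AE[OF AEeq])
  also have "\<dots> = (\<Sum>j<k. (\<integral>\<^sup>+x. ennreal (c j) * indicator (P j) x \<partial>M))"
    using Psets by (intro nn_integral_sum borel_measurable_times_ennreal borel_measurable_const borel_measurable_indicator) auto
  also have "\<dots> = (\<Sum>j<k. ennreal (c j) * emeasure M (P j))"
    using Psets by (intro sum.cong refl nn_integral_cmult_indicator) auto
  also have "\<dots> = (\<Sum>j<k. ennreal (c j * (1 / real m)))"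
  proof (rule sum.cong[OF refl])
    fix j assume j: "j \<in> {..<k}"
    show "ennreal (c j) * emeasure M (P j) = ennreal (c j * (1 / real m))"
      unfolding Pmeas[OF lessThan_iff[THEN iffD1, OF j]]
      by (rule ennreal_mult[symmetric]) (use c0[of j] j in auto)
  qed
  also have "\<dots> = ennreal (\<Sum>j<k. c j * (1 / real m))"
    by (rule sum_ennreal) (use c0 in auto)
  also have "(\<Sum>j<k. c j * (1 / real m)) = (1 / real m) * (\<Sum>j<k. c j)"
    by (subst sum_distrib_left) (simp add: mult.commute)
  also have "ennreal ((1 / real m) * (\<Sum>j<k. c j)) = ennreal (1 / real m) * ennreal (\<Sum>j<k. c j)"
    by (rule ennreal_mult) (use c0 in \<open>auto intro: sum_nonneg\<close>)
  finally have int: "(\<integral>\<^sup>+x. ennreal (h x) \<partial>M) = ennreal (1 / real m) * ennreal (\<Sum>j<k. c j)" .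
  have "(\<integral>\<^sup>+x. ennreal (h x) \<partial>M) * N (indicator E) = ennreal (1 / real m) * (ennreal (\<Sum>j<k. c j) * N (indicator (\<Union>j<k. P j)))"
    unfolding int NU by (simp add: mult.assoc)
  also have "\<dots> \<le> ennreal (1 / real m) * (of_nat k * N h)"
    by (intro mult_left_mono core) simp
  also have "\<dots> = ennreal (measure M E) * N h"
  proof -
    have "ennreal (1 / real m) * of_nat k = ennreal (1 / real m * real k)"
      unfolding ennreal_of_nat_eq_real_of_nat by (rule ennreal_mult[symmetric]) auto
    also have "1 / real m * real k = measure M E" using Emeas by simp
    finally show ?thesis by (simp add: mult.assoc[symmetric])
  qed
  finally show ?thesis .
qed


lemma avg_general:
  fixes f :: "'a \<Rightarrow> real"
  assumes ri: "ri_space M N" and ps: "prob_space M" and adm: "nonatomic M \<or> equal_atomic M"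
    and E: "E \<in> sets M" and Epos: "measure M E > 0" and f: "f \<in> borel_measurable M"
  shows "(\<integral>\<^sup>+x. ennreal \<bar>f x\<bar> * indicator E x \<partial>M) * N (indicator E) \<le> ennreal (measure M E) * N f"
proof -
  have bfn: "banach_function_norm M N" using ri unfolding ri_space_def by simp
  define g where "g x = \<bar>f x\<bar> * indicator E x" for x
  have g0: "0 \<le> g x" for x unfolding g_def by simp
  have gm: "g \<in> borel_measurable M" unfolding g_def using f E by measurable
  have Ngf: "N g \<le> N f" by (rule bfn_mono[OF bfn f gm]) (auto simp: g_def indicator_def)
  define u where "u x = ennreal (g x)" for x
  have um: "u \<in> borel_measurable M" unfolding u_def using gm by measurable
  obtain F where Fs: "\<And>i. simple_function M (F i)" and Finc: "incseq F"
    and Ffin: "\<And>i x. F i x < \<top>" and Fsup: "\<And>x. (SUP i. F i x) = u x"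
    using borel_measurable_implies_simple_function_sequence'[OF um] by blast
  have Fle: "F i x \<le> u x" for i x using Fsup[of x] by (metis SUP_upper UNIV_I)
  define h where "h i x = enn2real (F i x)" for i x
  have hm: "h i \<in> borel_measurable M" for i
    unfolding h_def using borel_measurable_simple_function[OF Fs[of i]] by (rule borel_measurable_enn2real)
  have hfin: "finite (h i ` space M)" for i
  proof -
    have "h i ` space M = enn2real ` (F i ` space M)" unfolding h_def by auto
    then show ?thesis using Fs[of i] unfolding simple_function_def by simp
  qed
  have hF: "ennreal (h i x) = F i x" for i x unfolding h_def using Ffin by (rule ennreal_enn2real)
  have h0: "\<forall>x\<in>space M. 0 \<le> h i x" for i unfolding h_def by simp
  have hE: "\<forall>x\<in>space M - E. h i x = 0" for i
  proof
    fix x assume "x \<in> space M - E"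
    then have "u x = 0" unfolding u_def g_def by simp
    then have "F i x = 0" using Fle[of i x] by simp
    then show "h i x = 0" unfolding h_def by simp
  qed
  have hg: "N (h i) \<le> N g" for i
  proof (rule bfn_mono[OF bfn gm hm])
    show "AE x in M. \<bar>h i x\<bar> \<le> \<bar>g x\<bar>"
    proof (rule AE_I2)
      fix x
      have "enn2real (F i x) \<le> enn2real (u x)" by (rule enn2real_mono[OF Fle]) (simp add: u_def)
      then show "\<bar>h i x\<bar> \<le> \<bar>g x\<bar>" unfolding h_def u_def using g0[of x] by simp
    qed
  qed
  have each: "(\<integral>\<^sup>+x. F i x \<partial>M) * N (indicator E) \<le> ennreal (measure M E) * N g" for i
  proof -
    have "(\<integral>\<^sup>+x. ennreal (h i x) \<partial>M) * N (indicator E) \<le> ennreal (measure M E) * N (h i)"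
    proof (cases "nonatomic M")
      case True
      then show ?thesis using avg_simple_nonatomic[OF ri ps True E Epos hm hfin h0 hE] by blast
    next
      case False
      then have "equal_atomic M" using adm by simp
      then show ?thesis using avg_simple_atomic[OF ri ps _ E Epos hm hfin h0 hE] by blast
    qed
    also have "\<dots> \<le> ennreal (measure M E) * N g" by (intro mult_left_mono hg) simp
    finally show ?thesis unfolding hF .
  qed
  have "(\<integral>\<^sup>+x. ennreal \<bar>f x\<bar> * indicator E x \<partial>M) = (\<integral>\<^sup>+x. u x \<partial>M)"
    by (rule nn_integral_cong) (simp add: u_def g_def indicator_def)
  also have "\<dots> = (\<integral>\<^sup>+x. (SUP i. F i x) \<partial>M)" using Fsup by simp
  also have "\<dots> = (SUP i. \<integral>\<^sup>+x. F i x \<partial>M)"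
    by (rule nn_integral_monotone_convergence_SUP[OF Finc]) (rule borel_measurable_simple_function[OF Fs])
  finally have int: "(\<integral>\<^sup>+x. ennreal \<bar>f x\<bar> * indicator E x \<partial>M) = (SUP i. \<integral>\<^sup>+x. F i x \<partial>M)" .
  have "(\<integral>\<^sup>+x. ennreal \<bar>f x\<bar> * indicator E x \<partial>M) * N (indicator E) = (SUP i. (\<integral>\<^sup>+x. F i x \<partial>M) * N (indicator E))"
    unfolding int by (rule SUP_mult_right_ennreal)
  also have "\<dots> \<le> ennreal (measure M E) * N g" by (rule SUP_least) (rule each)
  also have "\<dots> \<le> ennreal (measure M E) * N f" by (intro mult_left_mono Ngf) simp
  finally show ?thesis .
qed


theorem lemma46:
  fixes M :: "'a measure" and N0 N1 :: "('a \<Rightarrow> real) \<Rightarrow> ennreal" and \<phi> :: "real \<Rightarrow> real \<Rightarrow> real"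
  assumes "admissible_space M"
    and "ri_space M N0" and "ri_space M N1"
    and "class_P \<phi>"
    and "t > 0" and "\<exists>E\<in>sets M. measure M E = t"
  shows "fundamental_function M (marcinkiewicz_norm M \<phi> N0 N1) t =
         ennreal (\<phi> (enn2real (fundamental_function M N0 t)) (enn2real (fundamental_function M N1 t)))"
proof -
  note ri0 = assms(2) and ri1 = assms(3)
  have ps: "prob_space M" and adm: "nonatomic M \<or> equal_atomic M"
    using assms(1) unfolding admissible_space_def by auto
  interpret prob_space M by (rule ps)
  have bfn0: "banach_function_norm M N0" using ri0 unfolding ri_space_def by simp
  have bfn1: "banach_function_norm M N1" using ri1 unfolding ri_space_def by simp
  have cpall: "(\<forall>a\<ge>0. \<forall>b\<ge>0. \<phi> a b \<ge> 0) \<and>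
    (\<forall>l>0. \<forall>a\<ge>0. \<forall>b\<ge>0. \<phi> (l * a) (l * b) = l * \<phi> a b) \<and>
    (\<forall>a\<ge>0. \<forall>b\<ge>0. (a, b) \<noteq> (0, 0) \<longrightarrow> \<phi> a b \<noteq> 0) \<and>
    (\<forall>a\<ge>0. \<forall>a'\<ge>a. \<forall>b\<ge>0. \<forall>b'\<ge>b. \<phi> a b \<le> \<phi> a' b')"
    using assms(4) unfolding class_P_def .
  note cp1 = cpall[THEN conjunct1]
  note cp2 = cpall[THEN conjunct2, THEN conjunct1]
  note cp3 = cpall[THEN conjunct2, THEN conjunct2, THEN conjunct1]
  note cp4 = cpall[THEN conjunct2, THEN conjunct2, THEN conjunct2]
  have P1: "0 \<le> \<phi> a b" if "0 \<le> a" "0 \<le> b" for a b using cp1 that by blast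
  have P2: "\<phi> (l * a) (l * b) = l * \<phi> a b" if "0 < l" "0 \<le> a" "0 \<le> b" for l a b using cp2 that by blast
  have P3: "\<phi> a b \<noteq> 0" if "0 \<le> a" "0 \<le> b" "(a, b) \<noteq> (0, 0)" for a b using cp3 that by blast
  have P4: "\<phi> a b \<le> \<phi> a' b'" if "0 \<le> a" "a \<le> a'" "0 \<le> b" "b \<le> b'" for a a' b b' using cp4 that by blast
  note P = P1 P2 P3 P4
  have Ppos: "0 < \<phi> a b" if "0 < a" "0 < b" for a b
  proof -
    have "0 \<le> \<phi> a b" using P1[of a b] that by simp
    moreover have "\<phi> a b \<noteq> 0" using P3[of a b] that by simp
    ultimately show ?thesis by simp
  qed
  define E where "E = (SOME E. E \<in> sets M \<and> measure M E = t)"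
  have E: "E \<in> sets M" "measure M E = t"
    using someI_ex[of "\<lambda>E. E \<in> sets M \<and> measure M E = t"] assms(6) unfolding E_def by auto
  define chiE where "chiE = (indicator E :: 'a \<Rightarrow> real)"
  have FF: "fundamental_function M N t = N chiE" for N
    unfolding fundamental_function_def E_def chiE_def ..
  have chim: "chiE \<in> borel_measurable M" unfolding chiE_def using E by simp
  have Emt: "emeasure M E < \<top>" using emeasure_finite[of E] less_top by blast
  have Epos: "measure M E > 0" using E assms(5) by simp
  have Eepos: "emeasure M E > 0" using Epos E by (simp add: emeasure_eq_measure)
  have fin0: "N0 chiE < \<top>" unfolding chiE_def using bfn_ind_fin[OF bfn0 E(1)] Emt by simp
  have fin1: "N1 chiE < \<top>" unfolding chiE_def using bfn_ind_fin[OF bfn1 E(1)] Emt by simp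
  have pos0: "N0 chiE > 0" unfolding chiE_def by (rule ind_pos_norm[OF bfn0 E(1) Eepos])
  have pos1: "N1 chiE > 0" unfolding chiE_def by (rule ind_pos_norm[OF bfn1 E(1) Eepos])
  define a where "a = enn2real (N0 chiE)"
  define b where "b = enn2real (N1 chiE)"
  have a: "N0 chiE = ennreal a" "a > 0" unfolding a_def using fin0 pos0
    by (auto simp: ennreal_enn2real enn2real_positive_iff)
  have b: "N1 chiE = ennreal b" "b > 0" unfolding b_def using fin1 pos1
    by (auto simp: ennreal_enn2real enn2real_positive_iff)
  have z0: "N0 (\<lambda>x. 0) = 0" by (rule bfn_zero[OF bfn0])
  have z1: "N1 (\<lambda>x. 0) = 0" by (rule bfn_zero[OF bfn1])
  define D where "D = {(f0, f1). f0 \<in> borel_measurable M \<and> f1 \<in> borel_measurable M \<and>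
                  N0 f0 < \<infinity> \<and> N1 f1 < \<infinity> \<and> (\<forall>x\<in>space M. chiE x = f0 x + f1 x)}"
  have Kdef: "K_functional M N0 N1 s0 s1 chiE = (INF p \<in> D. ennreal s0 * N0 (fst p) + ennreal s1 * N1 (snd p))" for s0 s1
    unfolding K_functional_def D_def ..
  have K0: "K_functional M N0 N1 s0 s1 chiE \<le> ennreal (s0 * a)" if "0 < s0" for s0 s1
  proof -
    have "(chiE, \<lambda>x. 0) \<in> D" unfolding D_def using chim fin0 z1 by auto
    then have "K_functional M N0 N1 s0 s1 chiE \<le> ennreal s0 * N0 chiE + ennreal s1 * N1 (\<lambda>x. 0)"
      unfolding Kdef by (rule INF_lower2) simp
    also have "\<dots> = ennreal (s0 * a)" using z1 a that by (simp add: ennreal_mult)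
    finally show ?thesis .
  qed
  have K1: "K_functional M N0 N1 s0 s1 chiE \<le> ennreal (s1 * b)" if "0 < s1" for s0 s1
  proof -
    have "(\<lambda>x. 0, chiE) \<in> D" unfolding D_def using chim fin1 z0 by auto
    then have "K_functional M N0 N1 s0 s1 chiE \<le> ennreal s0 * N0 (\<lambda>x. 0) + ennreal s1 * N1 chiE"
      unfolding Kdef by (rule INF_lower2) simp
    also have "\<dots> = ennreal (s1 * b)" using z0 b that by (simp add: ennreal_mult)
    finally show ?thesis .
  qed
  have marc: "fundamental_function M (marcinkiewicz_norm M \<phi> N0 N1) t =
     (SUP p \<in> {0<..} \<times> {0<..}. K_functional M N0 N1 (fst p) (snd p) chiE / ennreal (dual_P \<phi> (fst p) (snd p)))"
    unfolding FF marcinkiewicz_norm_def ..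
  have rhs: "ennreal (\<phi> (enn2real (fundamental_function M N0 t)) (enn2real (fundamental_function M N1 t))) = ennreal (\<phi> a b)"
    unfolding FF a_def b_def ..
  show ?thesis unfolding marc rhs
  proof (rule antisym)
    show "(SUP p \<in> {0<..} \<times> {0<..}. K_functional M N0 N1 (fst p) (snd p) chiE / ennreal (dual_P \<phi> (fst p) (snd p))) \<le> ennreal (\<phi> a b)"
    proof (rule SUP_least)
      fix p :: "real \<times> real" assume "p \<in> {0<..} \<times> {0<..}"
      then obtain s0 s1 where p: "p = (s0, s1)" "0 < s0" "0 < s1" by auto
      define mn where "mn = min (s0 * a) (s1 * b)"
      have mnpos: "0 < mn" unfolding mn_def using p a b by simp
      define q where "q = \<phi> (1 / s0) (1 / s1)"
      have qpos: "0 < q" unfolding q_def using p by (intro Ppos) auto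
      have d: "dual_P \<phi> s0 s1 = 1 / q" unfolding dual_P_def q_def ..
      have R1: "mn / (1 / q) = \<phi> (mn * (1 / s0)) (mn * (1 / s1))"
        using P(2)[OF mnpos, of "1 / s0" "1 / s1"] p unfolding q_def by simp
      have R2: "\<phi> (mn * (1 / s0)) (mn * (1 / s1)) \<le> \<phi> a b"
      proof (rule P(4))
        show "0 \<le> mn * (1 / s0)" "0 \<le> mn * (1 / s1)" using mnpos p by auto
        have "mn \<le> s0 * a" "mn \<le> s1 * b" unfolding mn_def by auto
        then show "mn * (1 / s0) \<le> a" "mn * (1 / s1) \<le> b" using p by (auto simp: field_simps)
      qed
      have "K_functional M N0 N1 s0 s1 chiE \<le> ennreal mn"
        unfolding mn_def using K0[OF p(2), of s1] K1[OF p(3), of s0] by (simp add: min_def)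
      then have "K_functional M N0 N1 s0 s1 chiE / ennreal (1 / q) \<le> ennreal mn / ennreal (1 / q)"
        by (rule divide_right_mono_ennreal)
      also have "\<dots> = ennreal (mn / (1 / q))" using mnpos qpos by (intro divide_ennreal) auto
      also have "\<dots> \<le> ennreal (\<phi> a b)" using R1 R2 by (intro ennreal_leI) simp
      finally have "K_functional M N0 N1 s0 s1 chiE / ennreal (dual_P \<phi> s0 s1) \<le> ennreal (\<phi> a b)"
        unfolding d .
      then show "K_functional M N0 N1 (fst p) (snd p) chiE / ennreal (dual_P \<phi> (fst p) (snd p)) \<le> ennreal (\<phi> a b)"
        unfolding p by simp
    qed
  next
    have Kge: "1 \<le> K_functional M N0 N1 (1 / a) (1 / b) chiE"
      unfolding Kdef
    proof (rule INF_greatest)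
      fix p assume "p \<in> D"
      then obtain f0 f1 where p: "p = (f0, f1)" and f0: "f0 \<in> borel_measurable M" and f1: "f1 \<in> borel_measurable M"
        and sum: "\<forall>x\<in>space M. chiE x = f0 x + f1 x" unfolding D_def by auto
      define I0 where "I0 = (\<integral>\<^sup>+x. ennreal \<bar>f0 x\<bar> * indicator E x \<partial>M)"
      define I1 where "I1 = (\<integral>\<^sup>+x. ennreal \<bar>f1 x\<bar> * indicator E x \<partial>M)"
      have A0: "I0 * ennreal a \<le> ennreal t * N0 f0"
        using avg_general[OF ri0 ps adm E(1) Epos f0] a E(2) unfolding I0_def chiE_def by simp
      have A1: "I1 * ennreal b \<le> ennreal t * N1 f1"
        using avg_general[OF ri1 ps adm E(1) Epos f1] b E(2) unfolding I1_def chiE_def by simp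
      have "ennreal t = (\<integral>\<^sup>+x. indicator E x \<partial>M)" using E by (simp add: emeasure_eq_measure)
      also have "\<dots> \<le> (\<integral>\<^sup>+x. ennreal \<bar>f0 x\<bar> * indicator E x + ennreal \<bar>f1 x\<bar> * indicator E x \<partial>M)"
      proof (rule nn_integral_mono)
        fix x assume x: "x \<in> space M"
        show "indicator E x \<le> ennreal \<bar>f0 x\<bar> * indicator E x + ennreal \<bar>f1 x\<bar> * indicator E x"
        proof (cases "x \<in> E")
          case True
          then have "1 = f0 x + f1 x" using sum x unfolding chiE_def by auto
          then have "1 \<le> \<bar>f0 x\<bar> + \<bar>f1 x\<bar>" by linarith
          then have "ennreal 1 \<le> ennreal (\<bar>f0 x\<bar> + \<bar>f1 x\<bar>)" by (rule ennreal_leI)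
          then show ?thesis using True by (simp add: ennreal_plus)
        qed simp
      qed
      also have "\<dots> = I0 + I1" unfolding I0_def I1_def
      proof (rule nn_integral_add)
        show "(\<lambda>x. ennreal \<bar>f0 x\<bar> * indicator E x) \<in> borel_measurable M" using f0 E by measurable
        show "(\<lambda>x. ennreal \<bar>f1 x\<bar> * indicator E x) \<in> borel_measurable M" using f1 E by measurable
      qed
      finally have tI: "ennreal t \<le> I0 + I1" .
      have ia: "ennreal (1 / a) * ennreal a = 1" using a by (simp add: ennreal_mult[symmetric])
      have ib: "ennreal (1 / b) * ennreal b = 1" using b by (simp add: ennreal_mult[symmetric])
      have "ennreal t * 1 \<le> I0 + I1" using tI by simp
      also have "I0 + I1 = ennreal (1 / a) * (I0 * ennreal a) + ennreal (1 / b) * (I1 * ennreal b)"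
        using ia ib by (simp add: mult.commute mult.left_commute)
      also have "\<dots> \<le> ennreal (1 / a) * (ennreal t * N0 f0) + ennreal (1 / b) * (ennreal t * N1 f1)"
        by (intro add_mono mult_left_mono A0 A1) simp_all
      also have "\<dots> = ennreal t * (ennreal (1 / a) * N0 (fst p) + ennreal (1 / b) * N1 (snd p))"
        unfolding p by (simp add: algebra_simps)
      finally show "1 \<le> ennreal (1 / a) * N0 (fst p) + ennreal (1 / b) * N1 (snd p)"
        using assms(5) by (subst (asm) ennreal_mult_le_mult_iff) auto
    qed
    have dd: "dual_P \<phi> (1 / a) (1 / b) = 1 / \<phi> a b" unfolding dual_P_def by simp
    have phipos: "0 < \<phi> a b" using a b by (intro Ppos) auto
    have "ennreal (\<phi> a b) = 1 / ennreal (dual_P \<phi> (1 / a) (1 / b))"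
      unfolding dd using phipos by (subst ennreal_1[symmetric], subst divide_ennreal) auto
    also have "\<dots> \<le> K_functional M N0 N1 (1 / a) (1 / b) chiE / ennreal (dual_P \<phi> (1 / a) (1 / b))"
      by (rule divide_right_mono_ennreal[OF Kge])
    also have "\<dots> \<le> (SUP p \<in> {0<..} \<times> {0<..}. K_functional M N0 N1 (fst p) (snd p) chiE / ennreal (dual_P \<phi> (fst p) (snd p)))"
      by (rule SUP_upper2[of "(1 / a, 1 / b)"]) (use a b in auto)
    finally show "ennreal (\<phi> a b) \<le> (SUP p \<in> {0<..} \<times> {0<..}. K_functional M N0 N1 (fst p) (snd p) chiE / ennreal (dual_P \<phi> (fst p) (snd p)))" .
  qed
qed

end
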